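(* Let $\mu_1\in\mathcal{M}_+(S^1)$ with $\mu_1\neq0$. Then the functional $\mathbb{S}_{\mu_1}:\mathcal{M}(S^1)\to[0,+\infty]$ defined by $\mathbb{S}_{\mu_1}(0)=0$ and \[ \mathbb{S}_{\mu_1}(\mu_0):=\frac{|\mu_0|(S^1)}{2}\,\mathcal{U}^2\Big(\frac{\mu_0}{|\mu_0|(S^1)},\frac{\mu_1}{|\mu_1|(S^1)}\Big)\quad(\mu_0\neq0) \] is convex and positively one-homogeneous.
   Context: $S^1$ is the unit circle in $\mathbb{C}$; $\mathcal{M}(S^1)$ is the space of finite signed Radon measures and $|\mu|$ the total variation measure. Wasserstein–Fisher–Rao distance: for $\mu_0,\mu_1\in\mathcal{M}(S^1)$, let $\Gamma(\mu_0,\mu_1)$ be the set of nonnegative Borel measures $\gamma$ on $\mathbb{C}\times\mathbb{C}$ with finite second moment such that $(\theta_i)_\#(r_i^2\gamma)=\mu_i$, $i=0,1$, with $r_i(x_0,x_1)=|x_i|$, $\theta_i(x_0,x_1)=x_i/|x_i|$ (a fixed arbitrary point of $S^1$ if $x_i=0$); $\mathcal{U}(\mu_0,\mu_1):=\inf_{\gamma\in\Gamma(\mu_0,\mu_1)}(\int|x-y|^2\,\mathrm{d}\gamma)^{1/2}$, and $\mathcal{U}=+\infty$ if $\Gamma$ is empty (in particular whenever one of the measures is not nonnegative). *)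

theory Defs
  imports "HOL-Analysis.Analysis"
begin

definition S1 :: "complex set" where
  "S1 = sphere 0 1"

definition S1M :: "complex measure" where
  "S1M = restrict_space borel S1"

text \<open>Finite signed (Radon) measures on S^1, represented as real-valued set functions
  that vanish outside the Borel subsets of S^1 and are countably additive.
  (On a compact metric space every finite signed Borel measure is Radon.)\<close>
definition signed_measure_S1 :: "(complex set \<Rightarrow> real) \<Rightarrow> bool" where
  "signed_measure_S1 \<mu> \<longleftrightarrow>
     (\<forall>A. A \<notin> sets S1M \<longrightarrow> \<mu> A = 0) \<and> \<mu> {} = 0 \<and>
     (\<forall>F::nat \<Rightarrow> complex set. range F \<subseteq> sets S1M \<longrightarrow> disjoint_family F \<longrightarrow>
        (\<lambda>i. \<mu> (F i)) sums \<mu> (\<Union>i. F i))"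

definition nonneg_measure_S1 :: "(complex set \<Rightarrow> real) \<Rightarrow> bool" where
  "nonneg_measure_S1 \<mu> \<longleftrightarrow> signed_measure_S1 \<mu> \<and> (\<forall>A. 0 \<le> \<mu> A)"

definition zero_sm :: "complex set \<Rightarrow> real" where
  "zero_sm = (\<lambda>A. 0)"

definition scale_sm :: "real \<Rightarrow> (complex set \<Rightarrow> real) \<Rightarrow> (complex set \<Rightarrow> real)" where
  "scale_sm c \<mu> = (\<lambda>A. c * \<mu> A)"

definition add_sm :: "(complex set \<Rightarrow> real) \<Rightarrow> (complex set \<Rightarrow> real) \<Rightarrow> (complex set \<Rightarrow> real)" where
  "add_sm \<mu> \<nu> = (\<lambda>A. \<mu> A + \<nu> A)"

definition total_variation :: "(complex set \<Rightarrow> real) \<Rightarrow> real" where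
  "total_variation \<mu> =
     (SUP P \<in> {P. finite P \<and> P \<subseteq> sets S1M \<and> disjoint P}. \<Sum>A\<in>P. \<bar>\<mu> A\<bar>)"

definition theta :: "complex \<Rightarrow> complex" where
  "theta x = (if x = 0 then 1 else x / complex_of_real (cmod x))"

text \<open>Admissible plans Gamma(mu0, mu1): nonnegative Borel measures on C x C with
  finite second moment whose radially weighted angular marginals are mu0, mu1.\<close>
definition plans :: "(complex set \<Rightarrow> real) \<Rightarrow> (complex set \<Rightarrow> real) \<Rightarrow> (complex \<times> complex) measure set" where
  "plans \<mu>0 \<mu>1 = {\<gamma>. sets \<gamma> = sets borel \<and>
      (\<integral>\<^sup>+ p. ennreal ((cmod (fst p))\<^sup>2 + (cmod (snd p))\<^sup>2) \<partial>\<gamma>) < \<infinity> \<and>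
      (\<forall>A \<in> sets S1M.
         0 \<le> \<mu>0 A \<and>
         (\<integral>\<^sup>+ p. ennreal ((cmod (fst p))\<^sup>2) * indicator A (theta (fst p)) \<partial>\<gamma>) = ennreal (\<mu>0 A) \<and>
         0 \<le> \<mu>1 A \<and>
         (\<integral>\<^sup>+ p. ennreal ((cmod (snd p))\<^sup>2) * indicator A (theta (snd p)) \<partial>\<gamma>) = ennreal (\<mu>1 A))}"

definition transport_cost :: "(complex \<times> complex) measure \<Rightarrow> ennreal" where
  "transport_cost \<gamma> = (\<integral>\<^sup>+ p. ennreal ((cmod (fst p - snd p))\<^sup>2) \<partial>\<gamma>)"

text \<open>Wasserstein--Fisher--Rao distance U; the infimum over the empty set is +infinity.
  The cost is finite for every plan (finite second moment), so enn2real is harmless.\<close>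
definition WFR :: "(complex set \<Rightarrow> real) \<Rightarrow> (complex set \<Rightarrow> real) \<Rightarrow> ennreal" where
  "WFR \<mu>0 \<mu>1 = (INF \<gamma> \<in> plans \<mu>0 \<mu>1. ennreal (sqrt (enn2real (transport_cost \<gamma>))))"

definition S_fun :: "(complex set \<Rightarrow> real) \<Rightarrow> (complex set \<Rightarrow> real) \<Rightarrow> ennreal" where
  "S_fun \<mu>1 \<mu>0 =
     (if \<mu>0 = zero_sm then 0
      else ennreal (total_variation \<mu>0 / 2) *
           (WFR (scale_sm (1 / total_variation \<mu>0) \<mu>0)
                (scale_sm (1 / total_variation \<mu>1) \<mu>1))\<^sup>2)"

end

theory Submission
  imports Defs
begin


definition summ :: "'a measure \<Rightarrow> 'a measure \<Rightarrow> 'a measure" where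
  "summ M N = measure_of (space M) (sets M) (\<lambda>A. emeasure M A + emeasure N A)"

lemma summ_sets[simp]: "sets (summ M N) = sets M"
  unfolding summ_def by (simp add: sets.sets_measure_of_eq)

lemma summ_space[simp]: "space (summ M N) = space M"
  unfolding summ_def by (simp add: sets.space_measure_of_eq)

lemma summ_emeasure:
  assumes "sets N = sets M" "A \<in> sets M"
  shows "emeasure (summ M N) A = emeasure M A + emeasure N A"
  unfolding summ_def
proof (rule emeasure_measure_of_sigma)
  show "sigma_algebra (space M) (sets M)" by (rule sets.sigma_algebra_axioms)
  show "positive (sets M) (\<lambda>A. emeasure M A + emeasure N A)"
    by (simp add: positive_def assms)
  show "countably_additive (sets M) (\<lambda>A. emeasure M A + emeasure N A)"
    unfolding countably_additive_def
  proof (intro allI impI)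
    fix F :: "nat \<Rightarrow> _" assume h: "range F \<subseteq> sets M" "disjoint_family F" "\<Union> (range F) \<in> sets M"
    have "(\<Sum>i. emeasure M (F i) + emeasure N (F i)) = (\<Sum>i. emeasure M (F i)) + (\<Sum>i. emeasure N (F i))"
      by (rule suminf_add[symmetric]) auto
    also have "\<dots> = emeasure M (\<Union> (range F)) + emeasure N (\<Union> (range F))"
      using h assms by (simp add: suminf_emeasure)
    finally show "(\<Sum>i. emeasure M (F i) + emeasure N (F i)) = emeasure M (\<Union> (range F)) + emeasure N (\<Union> (range F))" .
  qed
qed (rule assms(2))

lemma summ_nn_integral:
  assumes N: "sets N = sets M" and f: "f \<in> borel_measurable M"
  shows "nn_integral (summ M N) f = nn_integral M f + nn_integral N f"
proof -
  have mN: "\<And>h::_\<Rightarrow>ennreal. h \<in> borel_measurable M \<Longrightarrow> h \<in> borel_measurable N"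
    using measurable_cong_sets[OF N refl, where N="borel :: ennreal measure"] by simp
  have mS: "\<And>h::_\<Rightarrow>ennreal. h \<in> borel_measurable M \<Longrightarrow> h \<in> borel_measurable (summ M N)"
    using measurable_cong_sets[of "summ M N" M "borel :: ennreal measure" borel] by simp
  show ?thesis using f
  proof induction
    case (cong f g)
    have sN: "space N = space M" using N by (rule sets_eq_imp_space_eq)
    have "nn_integral (summ M N) f = nn_integral (summ M N) g"
      by (rule nn_integral_cong) (simp add: cong.hyps(3))
    moreover have "nn_integral M f = nn_integral M g"
      by (rule nn_integral_cong) (simp add: cong.hyps(3))
    moreover have "nn_integral N f = nn_integral N g"
      by (rule nn_integral_cong) (simp add: cong.hyps(3) sN)
    ultimately show ?case using cong.IH by simp
  next
    case (set A)
    then show ?case using N by (simp add: summ_emeasure)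
  next
    case (mult f c)
    have fN: "f \<in> borel_measurable N" by (rule mN[OF mult.hyps(2)])
    have fS: "f \<in> borel_measurable (summ M N)" by (rule mS[OF mult.hyps(2)])
    have "nn_integral (summ M N) (\<lambda>x. c * f x) = c * nn_integral (summ M N) f"
      by (rule nn_integral_cmult[OF fS])
    also have "\<dots> = c * (nn_integral M f + nn_integral N f)" using mult.IH by simp
    also have "\<dots> = c * nn_integral M f + c * nn_integral N f" by (simp add: distrib_left)
    also have "\<dots> = nn_integral M (\<lambda>x. c * f x) + nn_integral N (\<lambda>x. c * f x)"
      by (simp only: nn_integral_cmult[OF fN, of c] nn_integral_cmult[OF mult.hyps(2), of c])
    finally show ?case .
  next
    case (add f g)
    have fN: "f \<in> borel_measurable N" "g \<in> borel_measurable N"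
      by (rule mN[OF add.hyps(1)], rule mN[OF add.hyps(3)])
    have fS: "f \<in> borel_measurable (summ M N)" "g \<in> borel_measurable (summ M N)"
      by (rule mS[OF add.hyps(1)], rule mS[OF add.hyps(3)])
    have "nn_integral (summ M N) (\<lambda>x. g x + f x) = nn_integral (summ M N) g + nn_integral (summ M N) f"
      by (rule nn_integral_add[OF fS(2) fS(1)])
    also have "\<dots> = (nn_integral M g + nn_integral N g) + (nn_integral M f + nn_integral N f)"
      using add.IH by simp
    also have "\<dots> = (nn_integral M g + nn_integral M f) + (nn_integral N g + nn_integral N f)"
      by (simp add: ac_simps)
    also have "\<dots> = nn_integral M (\<lambda>x. g x + f x) + nn_integral N (\<lambda>x. g x + f x)"
      using nn_integral_add[OF fN(2) fN(1)] nn_integral_add[OF add.hyps(3) add.hyps(1)] by simp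
    finally show ?case .
  next
    case (seq U)
    have UN: "U i \<in> borel_measurable N" for i by (rule mN[OF seq.hyps(1)])
    have US: "U i \<in> borel_measurable (summ M N)" for i by (rule mS[OF seq.hyps(1)])
    have eqU: "(SUP i. U i) = (\<lambda>x. SUP i. U i x)" by (rule ext) (simp add: image_comp)
    have "nn_integral (summ M N) (SUP i. U i) = (SUP i. nn_integral (summ M N) (U i))"
      using nn_integral_monotone_convergence_SUP[of U "summ M N"] US seq.hyps(3) eqU by simp
    also have "\<dots> = (SUP i. nn_integral M (U i) + nn_integral N (U i))"
      using seq.IH by simp
    also have "\<dots> = (SUP i. nn_integral M (U i)) + (SUP i. nn_integral N (U i))"
      by (rule ennreal_SUP_add) (use seq.hyps(3) incseq_nn_integral in auto)
    also have "\<dots> = nn_integral M (SUP i. U i) + nn_integral N (SUP i. U i)"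
      using nn_integral_monotone_convergence_SUP[of U M] nn_integral_monotone_convergence_SUP[of U N] UN seq.hyps(1,3) eqU
      by simp
    finally show ?case .
  qed
qed


lemma space_S1M[simp]: "space S1M = S1"
  unfolding S1M_def by (simp add: space_restrict_space)

lemma S1_in[simp]: "S1 \<in> sets S1M"
  using sets.top[of S1M] by simp

lemma sets_S1M_sub: "A \<in> sets S1M \<Longrightarrow> A \<subseteq> S1"
  using sets.sets_into_space[of A S1M] by simp

lemma sm_add:
  assumes sm: "signed_measure_S1 \<mu>" and A: "A \<in> sets S1M" and B: "B \<in> sets S1M" and d: "A \<inter> B = {}"
  shows "\<mu> (A \<union> B) = \<mu> A + \<mu> B"
proof -
  define F :: "nat \<Rightarrow> complex set" where "F i = (if i = 0 then A else if i = 1 then B else {})" for i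
  have r: "range F \<subseteq> sets S1M" using A B by (auto simp: F_def)
  have df: "disjoint_family F" using d unfolding disjoint_family_on_def F_def by auto
  have U: "(\<Union>i. F i) = A \<union> B"
  proof
    show "(\<Union>i. F i) \<subseteq> A \<union> B" by (auto simp: F_def split: if_splits)
    show "A \<union> B \<subseteq> (\<Union>i. F i)"
    proof
      fix x assume "x \<in> A \<union> B"
      then show "x \<in> (\<Union>i. F i)"
      proof
        assume "x \<in> A" then have "x \<in> F 0" by (simp add: F_def) then show ?thesis by blast
      next
        assume "x \<in> B" then have "x \<in> F 1" by (simp add: F_def) then show ?thesis by blast
      qed
    qed
  qed
  have s1: "(\<lambda>i. \<mu> (F i)) sums \<mu> (A \<union> B)"
    using sm r df U unfolding signed_measure_S1_def by metis
  have e: "\<mu> {} = 0" using sm unfolding signed_measure_S1_def by simp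
  have s2: "(\<lambda>i. \<mu> (F i)) sums (\<Sum>i\<in>{0,1}. \<mu> (F i))"
    by (rule sums_finite) (auto simp: F_def e)
  have "\<mu> (A \<union> B) = (\<Sum>i\<in>{0,1}. \<mu> (F i))" using sums_unique2[OF s1 s2] .
  then show ?thesis by (simp add: F_def)
qed

lemma sm_diff:
  assumes sm: "signed_measure_S1 \<mu>" and A: "A \<in> sets S1M" and B: "B \<in> sets S1M" and s: "B \<subseteq> A"
  shows "\<mu> A = \<mu> B + \<mu> (A - B)"
proof -
  have "A = B \<union> (A - B)" using s by blast
  moreover have "A - B \<in> sets S1M" using A B by auto
  ultimately show ?thesis using sm_add[OF sm B, of "A - B"] by (metis Diff_disjoint)
qed

lemma sm_empty: "signed_measure_S1 \<mu> \<Longrightarrow> \<mu> {} = 0"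
  unfolding signed_measure_S1_def by simp

lemma sm_out: "signed_measure_S1 \<mu> \<Longrightarrow> A \<notin> sets S1M \<Longrightarrow> \<mu> A = 0"
  unfolding signed_measure_S1_def by simp

lemma sm_sum:
  assumes sm: "signed_measure_S1 \<mu>"
  shows "finite P \<Longrightarrow> P \<subseteq> sets S1M \<Longrightarrow> disjoint P \<Longrightarrow> (\<Sum>A\<in>P. \<mu> A) = \<mu> (\<Union>P)"
proof (induction P rule: finite_induct)
  case empty
  then show ?case using sm_empty[OF sm] by simp
next
  case (insert x F)
  have dF: "disjoint F" using insert.prems(2) by (meson pairwise_subset subset_insertI)
  have xF: "x \<inter> \<Union>F = {}"
  proof -
    have "x \<inter> y = {}" if "y \<in> F" for y
    proof -
      have "x \<noteq> y" using insert.hyps(2) that by auto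
      then show ?thesis using insert.prems(2) that unfolding pairwise_def disjnt_def by auto
    qed
    then show ?thesis by blast
  qed
  have UF: "\<Union>F \<in> sets S1M" using insert by (intro sets.finite_Union) auto
  have "(\<Sum>A\<in>insert x F. \<mu> A) = \<mu> x + \<mu> (\<Union>F)" using insert dF by simp
  also have "\<dots> = \<mu> (x \<union> \<Union>F)" using sm_add[OF sm _ UF xF] insert.prems by simp
  finally show ?case by simp
qed

lemma sm_bounded:
  assumes sm: "signed_measure_S1 \<mu>"
  shows "\<exists>K. \<forall>A\<in>sets S1M. \<bar>\<mu> A\<bar> \<le> K"
proof (rule ccontr)
  assume nb: "\<not> ?thesis"
  define bad where "bad B \<longleftrightarrow> B \<in> sets S1M \<and> (\<forall>K. \<exists>C\<in>sets S1M. C \<subseteq> B \<and> K < \<bar>\<mu> C\<bar>)" for B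
  define Q where "Q B CE \<longleftrightarrow> bad (fst CE) \<and> fst CE \<subseteq> B \<and> snd CE \<in> sets S1M \<and> snd CE \<subseteq> B
      \<and> fst CE \<inter> snd CE = {} \<and> 1 \<le> \<bar>\<mu> (snd CE)\<bar>" for B CE
  have bad0: "bad S1"
    unfolding bad_def
  proof (intro conjI allI)
    fix K
    obtain A where "A \<in> sets S1M" "\<not> \<bar>\<mu> A\<bar> \<le> K" using nb by blast
    then show "\<exists>C\<in>sets S1M. C \<subseteq> S1 \<and> K < \<bar>\<mu> C\<bar>" using sets_S1M_sub by (auto simp: not_le)
  qed simp
  have step: "\<exists>CE. Q B CE" if bB: "bad B" for B
  proof -
    have Bs: "B \<in> sets S1M" using bB by (simp add: bad_def)
    have "\<exists>C\<in>sets S1M. C \<subseteq> B \<and> \<bar>\<mu> B\<bar> + 1 < \<bar>\<mu> C\<bar>"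
      using bB unfolding bad_def by (elim conjE allE[of _ "\<bar>\<mu> B\<bar> + 1"])
    then obtain D where D: "D \<in> sets S1M" "D \<subseteq> B" "\<bar>\<mu> B\<bar> + 1 < \<bar>\<mu> D\<bar>"
      by blast
    have BD: "B - D \<in> sets S1M" using Bs D by auto
    have eq: "\<mu> B = \<mu> D + \<mu> (B - D)" by (rule sm_diff[OF sm Bs D(1) D(2)])
    have g1: "1 \<le> \<bar>\<mu> (B - D)\<bar>" "1 \<le> \<bar>\<mu> D\<bar>" using eq D(3) by auto
    have "bad D \<or> bad (B - D)"
    proof (rule ccontr)
      assume "\<not> (bad D \<or> bad (B - D))"
      then have "\<not> (\<forall>K. \<exists>C\<in>sets S1M. C \<subseteq> D \<and> K < \<bar>\<mu> C\<bar>)"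
          "\<not> (\<forall>K. \<exists>C\<in>sets S1M. C \<subseteq> B - D \<and> K < \<bar>\<mu> C\<bar>)"
        using D(1) BD unfolding bad_def by simp_all
      then obtain K1 K2 where K1: "\<forall>C\<in>sets S1M. C \<subseteq> D \<longrightarrow> \<bar>\<mu> C\<bar> \<le> K1"
        and K2: "\<forall>C\<in>sets S1M. C \<subseteq> B - D \<longrightarrow> \<bar>\<mu> C\<bar> \<le> K2"
        by (meson not_le)
      have "\<exists>C\<in>sets S1M. C \<subseteq> B \<and> K1 + K2 < \<bar>\<mu> C\<bar>"
        using bB unfolding bad_def by (elim conjE allE[of _ "K1 + K2"])
      then obtain C where C: "C \<in> sets S1M" "C \<subseteq> B" "K1 + K2 < \<bar>\<mu> C\<bar>"
        by blast
      have CD: "C \<inter> D \<in> sets S1M" using C(1) D(1) by (rule sets.Int)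
      have CmD: "C - D \<in> sets S1M" using C(1) D(1) by (rule sets.Diff)
      have e1: "\<mu> C = \<mu> (C \<inter> D) + \<mu> (C - (C \<inter> D))" by (rule sm_diff[OF sm C(1) CD Int_lower1])
      have e2: "C - (C \<inter> D) = C - D" by blast
      have s1: "C \<inter> D \<subseteq> D" by blast
      have s2: "C - D \<subseteq> B - D" using C(2) by blast
      have b1: "\<bar>\<mu> (C \<inter> D)\<bar> \<le> K1" using K1 CD s1 by blast
      have b2: "\<bar>\<mu> (C - D)\<bar> \<le> K2" using K2 CmD s2 by blast
      have "\<bar>\<mu> C\<bar> \<le> \<bar>\<mu> (C \<inter> D)\<bar> + \<bar>\<mu> (C - D)\<bar>" using e1 e2 by (simp add: abs_triangle_ineq)
      then show False using C(3) b1 b2 by linarith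
    qed
    then show ?thesis
    proof
      assume "bad D"
      then have "Q B (D, B - D)" unfolding Q_def using D BD g1 by auto
      then show ?thesis by blast
    next
      assume "bad (B - D)"
      then have "Q B (B - D, D)" unfolding Q_def using D BD g1 by auto
      then show ?thesis by blast
    qed
  qed
  define st where "st B = (SOME CE. Q B CE)" for B
  have stQ: "Q B (st B)" if "bad B" for B
    unfolding st_def using step[OF that] by (rule someI_ex)
  define Bs where "Bs = rec_nat S1 (\<lambda>_ B. fst (st B))"
  have Bs0: "Bs 0 = S1" and BsS: "Bs (Suc n) = fst (st (Bs n))" for n
    by (simp_all add: Bs_def)
  define Es where "Es n = snd (st (Bs n))" for n
  have badn: "bad (Bs n)" for n
  proof (induction n)
    case 0 then show ?case using bad0 by (simp add: Bs0)
  next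
    case (Suc n) then show ?case using stQ[OF Suc] by (simp add: BsS Q_def)
  qed
  have Qn: "Q (Bs n) (st (Bs n))" for n using stQ[OF badn] .
  have dec: "decseq Bs"
    by (rule decseq_SucI) (use Qn in \<open>simp add: BsS Q_def\<close>)
  have Es_sub: "Es n \<subseteq> Bs n" for n using Qn[of n] by (simp add: Es_def Q_def)
  have Es_dis: "Es n \<inter> Bs (Suc n) = {}" for n using Qn[of n] by (auto simp: Es_def Q_def BsS)
  have Es_sets: "Es n \<in> sets S1M" for n using Qn[of n] by (simp add: Es_def Q_def)
  have Es_big: "1 \<le> \<bar>\<mu> (Es n)\<bar>" for n using Qn[of n] by (simp add: Es_def Q_def)
  have dis_lt: "Es m \<inter> Es n = {}" if "m < n" for m n
  proof -
    have "Bs n \<subseteq> Bs (Suc m)" using dec that by (simp add: decseq_def)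
    then show ?thesis using Es_sub[of n] Es_dis[of m] by blast
  qed
  have df: "disjoint_family Es"
    unfolding disjoint_family_on_def
  proof (intro ballI impI)
    fix m n :: nat assume "m \<noteq> n"
    then show "Es m \<inter> Es n = {}"
      using dis_lt[of m n] dis_lt[of n m] by (cases "m < n") (auto simp: Int_commute)
  qed
  have "(\<lambda>i. \<mu> (Es i)) sums \<mu> (\<Union>i. Es i)"
    using sm df Es_sets unfolding signed_measure_S1_def by blast
  then have "(\<lambda>i. \<mu> (Es i)) \<longlonglongrightarrow> 0"
    using summable_LIMSEQ_zero sums_summable by blast
  then obtain n0 where "\<forall>n\<ge>n0. norm (\<mu> (Es n) - 0) < 1"
    using LIMSEQ_D[of _ 0 1] by force
  then show False using Es_big[of n0] by auto
qed



definition adm :: "complex set set set" where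
  "adm = {P. finite P \<and> P \<subseteq> sets S1M \<and> disjoint P}"

lemma tv_def': "total_variation \<mu> = (SUP P\<in>adm. \<Sum>A\<in>P. \<bar>\<mu> A\<bar>)"
  unfolding total_variation_def adm_def by simp

lemma adm_single: "A \<in> sets S1M \<Longrightarrow> {A} \<in> adm"
  unfolding adm_def by simp

lemma adm_empty: "{} \<in> adm"
  unfolding adm_def by simp

lemma sm_sub_bound:
  assumes sm: "signed_measure_S1 \<mu>" and K: "\<forall>A\<in>sets S1M. \<bar>\<mu> A\<bar> \<le> K" and P: "P \<in> adm"
  shows "(\<Sum>A\<in>P. \<bar>\<mu> A\<bar>) \<le> 2 * K"
proof -
  have fP: "finite P" and sP: "P \<subseteq> sets S1M" and dP: "disjoint P" using P by (auto simp: adm_def)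
  define Pp where "Pp = {A\<in>P. 0 \<le> \<mu> A}"
  define Pn where "Pn = {A\<in>P. \<not> 0 \<le> \<mu> A}"
  have "(\<Sum>A\<in>P. \<bar>\<mu> A\<bar>) = (\<Sum>A\<in>P. (if 0 \<le> \<mu> A then \<mu> A else 0) + (if 0 \<le> \<mu> A then 0 else - \<mu> A))"
    by (rule sum.cong) auto
  also have "\<dots> = (\<Sum>A\<in>P. (if 0 \<le> \<mu> A then \<mu> A else 0)) + (\<Sum>A\<in>P. (if \<not> 0 \<le> \<mu> A then - \<mu> A else 0))"
    by (simp add: sum.distrib if_not_P) (rule sum.cong, auto)
  also have "\<dots> = (\<Sum>A\<in>Pp. \<mu> A) + (\<Sum>A\<in>Pn. - \<mu> A)"
    unfolding Pp_def Pn_def using fP by (simp only: sum.inter_filter)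
  also have "(\<Sum>A\<in>Pp. \<mu> A) = \<mu> (\<Union>Pp)"
    by (rule sm_sum[OF sm]) (use fP sP dP in \<open>auto simp: Pp_def intro: pairwise_subset\<close>)
  also have "(\<Sum>A\<in>Pn. - \<mu> A) = - \<mu> (\<Union>Pn)"
    using sm_sum[OF sm, of Pn] fP sP dP by (auto simp: Pn_def sum_negf intro: pairwise_subset)
  also have "\<mu> (\<Union>Pp) + - \<mu> (\<Union>Pn) \<le> 2 * K"
  proof -
    have "\<Union>Pp \<in> sets S1M" "\<Union>Pn \<in> sets S1M"
      using fP sP by (auto simp: Pp_def Pn_def intro!: sets.finite_Union)
    then have "\<bar>\<mu> (\<Union>Pp)\<bar> \<le> K" "\<bar>\<mu> (\<Union>Pn)\<bar> \<le> K" using K by blast+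
    then show ?thesis by linarith
  qed
  finally show ?thesis .
qed

lemma tv_bdd:
  assumes sm: "signed_measure_S1 \<mu>"
  shows "bdd_above ((\<lambda>P. \<Sum>A\<in>P. \<bar>\<mu> A\<bar>) ` adm)"
proof -
  obtain K where K: "\<forall>A\<in>sets S1M. \<bar>\<mu> A\<bar> \<le> K" using sm_bounded[OF sm] by blast
  show ?thesis using sm_sub_bound[OF sm K] by (intro bdd_aboveI2) blast
qed

lemma tv_ge:
  assumes sm: "signed_measure_S1 \<mu>" and A: "A \<in> sets S1M"
  shows "\<bar>\<mu> A\<bar> \<le> total_variation \<mu>"
  unfolding tv_def'
  using cSUP_upper[OF adm_single[OF A] tv_bdd[OF sm]] by simp

lemma nonneg_sum_le:
  assumes nn: "nonneg_measure_S1 \<mu>" and P: "P \<in> adm"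
  shows "(\<Sum>A\<in>P. \<bar>\<mu> A\<bar>) \<le> \<mu> S1"
proof -
  have sm: "signed_measure_S1 \<mu>" and pos: "\<And>A. 0 \<le> \<mu> A" using nn by (auto simp: nonneg_measure_S1_def)
  have fP: "finite P" and sP: "P \<subseteq> sets S1M" and dP: "disjoint P" using P by (auto simp: adm_def)
  have "(\<Sum>A\<in>P. \<bar>\<mu> A\<bar>) = (\<Sum>A\<in>P. \<mu> A)" using pos by simp
  also have "\<dots> = \<mu> (\<Union>P)" by (rule sm_sum[OF sm fP sP dP])
  also have "\<dots> \<le> \<mu> S1"
  proof -
    have U: "\<Union>P \<in> sets S1M" using fP sP by (intro sets.finite_Union)
    have "\<Union>P \<subseteq> S1" using sP sets_S1M_sub by blast
    then have "\<mu> S1 = \<mu> (\<Union>P) + \<mu> (S1 - \<Union>P)" by (rule sm_diff[OF sm S1_in U])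
    then show ?thesis using pos[of "S1 - \<Union>P"] by linarith
  qed
  finally show ?thesis .
qed

lemma tv_nonneg:
  assumes nn: "nonneg_measure_S1 \<mu>"
  shows "total_variation \<mu> = \<mu> S1"
proof (rule antisym)
  have sm: "signed_measure_S1 \<mu>" and pos: "\<And>A. 0 \<le> \<mu> A" using nn by (auto simp: nonneg_measure_S1_def)
  show "total_variation \<mu> \<le> \<mu> S1"
    unfolding tv_def' using adm_empty nonneg_sum_le[OF nn] by (intro cSUP_least) auto
  show "\<mu> S1 \<le> total_variation \<mu>"
    using tv_ge[OF sm S1_in] pos[of S1] by simp
qed

lemma sm_nonzero:
  assumes sm: "signed_measure_S1 \<mu>" and nz: "\<mu> \<noteq> zero_sm"
  obtains A where "A \<in> sets S1M" "\<mu> A \<noteq> 0"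
proof -
  obtain A where "\<mu> A \<noteq> 0" using nz unfolding zero_sm_def by (meson ext)
  then show ?thesis using that sm_out[OF sm] by blast
qed

lemma tv_pos:
  assumes sm: "signed_measure_S1 \<mu>" and nz: "\<mu> \<noteq> zero_sm"
  shows "0 < total_variation \<mu>"
proof -
  obtain A where "A \<in> sets S1M" "\<mu> A \<noteq> 0" using sm_nonzero[OF sm nz] .
  then show ?thesis using tv_ge[OF sm] by force
qed



lemma scale_signed: "signed_measure_S1 \<mu> \<Longrightarrow> signed_measure_S1 (scale_sm c \<mu>)"
  unfolding signed_measure_S1_def scale_sm_def by (auto intro: sums_mult)

lemma add_signed: "signed_measure_S1 \<mu> \<Longrightarrow> signed_measure_S1 \<nu> \<Longrightarrow> signed_measure_S1 (add_sm \<mu> \<nu>)"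
  unfolding signed_measure_S1_def add_sm_def by (auto intro: sums_add)

lemma S_zero[simp]: "S_fun \<nu> zero_sm = 0"
  unfolding S_fun_def by simp

lemma S_top:
  assumes sm: "signed_measure_S1 \<mu>" and neg: "\<mu> A < 0"
  shows "S_fun \<nu> \<mu> = top"
proof -
  have A: "A \<in> sets S1M" using sm_out[OF sm, of A] neg by force
  have nz: "\<mu> \<noteq> zero_sm" using neg unfolding zero_sm_def by auto
  have tp: "0 < total_variation \<mu>" by (rule tv_pos[OF sm nz])
  have "scale_sm (1 / total_variation \<mu>) \<mu> A < 0"
    unfolding scale_sm_def using tp neg by (simp add: divide_neg_pos)
  then have "plans (scale_sm (1 / total_variation \<mu>) \<mu>) Y = {}" for Y
    unfolding plans_def using A by force
  then have "WFR (scale_sm (1 / total_variation \<mu>) \<mu>) Y = top" for Y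
    unfolding WFR_def by simp
  then show ?thesis unfolding S_fun_def using nz tp
    by (simp add: ennreal_mult_eq_top_iff)
qed

lemma nonneg_pos_mass:
  assumes nn: "nonneg_measure_S1 \<mu>" and nz: "\<mu> \<noteq> zero_sm"
  shows "0 < \<mu> S1"
  using tv_pos[of \<mu>] tv_nonneg[OF nn] nn nz by (simp add: nonneg_measure_S1_def)

lemma S_nonneg:
  assumes nn: "nonneg_measure_S1 \<mu>" and nz: "\<mu> \<noteq> zero_sm"
  shows "S_fun \<nu> \<mu> = ennreal (\<mu> S1 / 2) *
           (WFR (scale_sm (1 / \<mu> S1) \<mu>) (scale_sm (1 / total_variation \<nu>) \<nu>))\<^sup>2"
  unfolding S_fun_def using nz tv_nonneg[OF nn] by simp

lemma S_homog:
  assumes sm: "signed_measure_S1 \<mu>" and c: "0 < c"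
  shows "S_fun \<nu> (scale_sm c \<mu>) = ennreal c * S_fun \<nu> \<mu>"
proof (cases "\<mu> = zero_sm")
  case True
  then have "scale_sm c \<mu> = zero_sm" by (simp add: scale_sm_def zero_sm_def)
  then show ?thesis using True by simp
next
  case nz: False
  show ?thesis
  proof (cases "\<exists>A. \<mu> A < 0")
    case True
    then obtain A where A: "\<mu> A < 0" by blast
    have "scale_sm c \<mu> A < 0" using A c by (simp add: scale_sm_def mult_pos_neg)
    then have "S_fun \<nu> (scale_sm c \<mu>) = top" by (rule S_top[OF scale_signed[OF sm]])
    moreover have "S_fun \<nu> \<mu> = top" by (rule S_top[OF sm A])
    ultimately show ?thesis using c by (simp add: ennreal_mult_top)
  next
    case False
    then have nn: "nonneg_measure_S1 \<mu>" using sm by (auto simp: nonneg_measure_S1_def not_less)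
    have nnc: "nonneg_measure_S1 (scale_sm c \<mu>)" using nn c scale_signed[OF sm]
      by (auto simp: nonneg_measure_S1_def scale_sm_def)
    have nzc: "scale_sm c \<mu> \<noteq> zero_sm"
    proof
      assume "scale_sm c \<mu> = zero_sm"
      then have "\<mu> A = 0" for A using c unfolding scale_sm_def zero_sm_def by (metis mult_eq_0_iff less_irrefl)
      then show False using nz by (auto simp: zero_sm_def)
    qed
    have m: "0 < \<mu> S1" by (rule nonneg_pos_mass[OF nn nz])
    have eq: "scale_sm (1 / scale_sm c \<mu> S1) (scale_sm c \<mu>) = scale_sm (1 / \<mu> S1) \<mu>"
      unfolding scale_sm_def using c by (auto simp: fun_eq_iff)
    have "S_fun \<nu> (scale_sm c \<mu>) = ennreal (c * \<mu> S1 / 2) *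
           (WFR (scale_sm (1 / \<mu> S1) \<mu>) (scale_sm (1 / total_variation \<nu>) \<nu>))\<^sup>2"
      using S_nonneg[OF nnc nzc, of \<nu>] eq by (simp add: scale_sm_def)
    also have "ennreal (c * \<mu> S1 / 2) = ennreal c * ennreal (\<mu> S1 / 2)"
      using c m by (simp add: ennreal_mult[symmetric])
    finally show ?thesis using S_nonneg[OF nn nz, of \<nu>] by (simp add: mult.assoc)
  qed
qed



lemma theta_meas: "theta \<in> borel_measurable borel"
  unfolding theta_def[abs_def] by measurable

lemma S1M_borel: "A \<in> sets S1M \<Longrightarrow> A \<in> sets borel"
proof -
  assume "A \<in> sets S1M"
  moreover have "S1 \<in> sets borel" unfolding S1_def by (simp add: closed_sphere borel_closed)
  ultimately show ?thesis unfolding S1M_def by (simp add: sets_restrict_space_iff)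
qed

lemma ind1_meas: "A \<in> sets borel \<Longrightarrow> (\<lambda>x::complex\<times>complex. indicator A (theta (fst x)) :: ennreal) \<in> borel_measurable (borel \<Otimes>\<^sub>M borel)"
  by (rule measurable_compose[OF measurable_compose[OF measurable_fst theta_meas] borel_measurable_indicator]) simp

lemma ind2_meas: "A \<in> sets borel \<Longrightarrow> (\<lambda>x::complex\<times>complex. indicator A (theta (snd x)) :: ennreal) \<in> borel_measurable (borel \<Otimes>\<^sub>M borel)"
  by (rule measurable_compose[OF measurable_compose[OF measurable_snd theta_meas] borel_measurable_indicator]) simp

lemma marg1_meas: "A \<in> sets borel \<Longrightarrow>
  (\<lambda>p::complex\<times>complex. ennreal ((cmod (fst p))\<^sup>2) * indicator A (theta (fst p))) \<in> borel_measurable borel"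
  unfolding borel_prod[symmetric] apply (rule borel_measurable_times_ennreal)
  subgoal by measurable
  by (rule ind1_meas)

lemma marg2_meas: "A \<in> sets borel \<Longrightarrow>
  (\<lambda>p::complex\<times>complex. ennreal ((cmod (snd p))\<^sup>2) * indicator A (theta (snd p))) \<in> borel_measurable borel"
  unfolding borel_prod[symmetric] apply (rule borel_measurable_times_ennreal)
  subgoal by measurable
  by (rule ind2_meas)

lemma mom_meas:
  "(\<lambda>p::complex\<times>complex. ennreal ((cmod (fst p))\<^sup>2 + (cmod (snd p))\<^sup>2)) \<in> borel_measurable borel"
  unfolding borel_prod[symmetric] by measurable

lemma cost_meas:
  "(\<lambda>p::complex\<times>complex. ennreal ((cmod (fst p - snd p))\<^sup>2)) \<in> borel_measurable borel"
  unfolding borel_prod[symmetric] by measurable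



lemma meas_tr: "f \<in> borel_measurable borel \<Longrightarrow> sets M = sets borel \<Longrightarrow> (f::_\<Rightarrow>ennreal) \<in> borel_measurable M"
  using measurable_cong_sets[of M borel "borel :: ennreal measure" borel] by simp

lemma sq_le_ennreal:
  fixes a b :: ennreal
  assumes "a^2 \<le> b^2" shows "a \<le> b"
proof (rule ccontr)
  assume "\<not> a \<le> b"
  then have ba: "b < a" by simp
  have "b < top" by (rule order.strict_trans2[OF ba top_greatest])
  then obtain b' where b': "b = ennreal b'" "0 \<le> b'" using less_top_ennreal by blast
  show False
  proof (cases "a = top")
    case True
    then have "a^2 = top" by (simp add: power2_eq_square)
    moreover have "b^2 < top" using b' by (simp add: ennreal_power)
    ultimately show False using assms by simp
  next
    case False
    then obtain a' where a': "a = ennreal a'" "0 \<le> a'" using less_top_ennreal top.not_eq_extremum by blast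
    have "b' < a'" using ba a' b' by (simp add: ennreal_less_iff)
    then have "b'^2 < a'^2" using b' by (simp add: power_strict_mono)
    then have "b^2 < a^2" using a' b' by (simp add: ennreal_power ennreal_less_iff)
    then show False using assms by simp
  qed
qed

lemma sq_INF:
  fixes g :: "'a \<Rightarrow> ennreal"
  shows "(INF x\<in>X. g x)^2 = (INF x\<in>X. (g x)^2)"
proof (rule antisym)
  show "(INF x\<in>X. g x)^2 \<le> (INF x\<in>X. (g x)^2)"
  proof (rule INF_greatest)
    fix x assume "x \<in> X"
    then have "(INF x\<in>X. g x) \<le> g x" by (rule INF_lower)
    then show "(INF x\<in>X. g x)^2 \<le> (g x)^2" by (rule power_mono) simp
  qed
  define v where "v = (INF x\<in>X. (g x)^2)"
  obtain r :: ennreal where r: "r^2 = v"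
  proof (cases "v = top")
    case True
    then show ?thesis using that[of top] by (simp add: power2_eq_square)
  next
    case False
    then have "ennreal (sqrt (enn2real v))^2 = v"
      by (simp add: ennreal_power enn2real_nonneg ennreal_enn2real_if)
    then show ?thesis using that by blast
  qed
  have "r \<le> g x" if "x \<in> X" for x
  proof (rule sq_le_ennreal)
    have "(INF x\<in>X. (g x)^2) \<le> (g x)^2" using that by (rule INF_lower)
    then show "r^2 \<le> (g x)^2" using r unfolding v_def by simp
  qed
  then have "r \<le> (INF x\<in>X. g x)" by (rule INF_greatest)
  then have "r^2 \<le> (INF x\<in>X. g x)^2" by (rule power_mono) simp
  then show "(INF x\<in>X. (g x)^2) \<le> (INF x\<in>X. g x)^2" using r v_def by simp
qed

lemma sq2: fixes a b :: real shows "(a + b)^2 \<le> 2 * (a^2 + b^2)"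
proof -
  have "0 \<le> (a - b)^2" by simp
  moreover have "(a + b)^2 + (a - b)^2 = 2 * (a^2 + b^2)" by (simp add: power2_eq_square algebra_simps)
  ultimately show ?thesis by linarith
qed

lemma cost_fin:
  assumes g: "\<gamma> \<in> plans P Q"
  shows "transport_cost \<gamma> < top"
proof -
  have sg: "sets \<gamma> = sets borel" and mom: "(\<integral>\<^sup>+ p. ennreal ((cmod (fst p))\<^sup>2 + (cmod (snd p))\<^sup>2) \<partial>\<gamma>) < \<infinity>"
    using g by (auto simp: plans_def)
  have pt: "ennreal ((cmod (fst p - snd p))\<^sup>2) \<le> 2 * ennreal ((cmod (fst p))\<^sup>2 + (cmod (snd p))\<^sup>2)" for p :: "complex \<times> complex"
  proof -
    have "cmod (fst p - snd p) \<le> cmod (fst p) + cmod (snd p)" by (rule norm_triangle_ineq4)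
    then have "(cmod (fst p - snd p))\<^sup>2 \<le> (cmod (fst p) + cmod (snd p))\<^sup>2"
      by (simp add: power_mono)
    also have "\<dots> \<le> 2 * ((cmod (fst p))\<^sup>2 + (cmod (snd p))\<^sup>2)"
      by (rule sq2)
    finally have "ennreal ((cmod (fst p - snd p))\<^sup>2) \<le> ennreal (2 * ((cmod (fst p))\<^sup>2 + (cmod (snd p))\<^sup>2))"
      by (rule ennreal_leI)
    also have "\<dots> = ennreal 2 * ennreal ((cmod (fst p))\<^sup>2 + (cmod (snd p))\<^sup>2)"
      by (rule ennreal_mult) auto
    finally show ?thesis by simp
  qed
  have "transport_cost \<gamma> \<le> (\<integral>\<^sup>+ p. 2 * ennreal ((cmod (fst p))\<^sup>2 + (cmod (snd p))\<^sup>2) \<partial>\<gamma>)"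
    unfolding transport_cost_def by (intro nn_integral_mono pt)
  also have "\<dots> = 2 * (\<integral>\<^sup>+ p. ennreal ((cmod (fst p))\<^sup>2 + (cmod (snd p))\<^sup>2) \<partial>\<gamma>)"
    by (rule nn_integral_cmult[OF meas_tr[OF mom_meas sg]])
  also have "\<dots> < top" using mom by (simp add: ennreal_mult_less_top)
  finally show ?thesis .
qed

lemma WFR_sq: "(WFR P Q)^2 = (INF \<gamma>\<in>plans P Q. transport_cost \<gamma>)"
  unfolding WFR_def sq_INF
proof (rule INF_cong[OF refl])
  fix \<gamma> assume "\<gamma> \<in> plans P Q"
  then have "transport_cost \<gamma> \<noteq> top" using cost_fin by fastforce
  then show "(ennreal (sqrt (enn2real (transport_cost \<gamma>))))^2 = transport_cost \<gamma>"
    by (simp add: ennreal_power enn2real_nonneg ennreal_enn2real_if)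
qed



lemma fin_ennreal: "(x::ennreal) < top \<Longrightarrow> \<exists>r\<ge>0. x = ennreal r"
  using less_top_ennreal by blast

lemma lt_add_eps: "(F::ennreal) < top \<Longrightarrow> 0 < d \<Longrightarrow> F < F + ennreal d"
proof -
  assume "F < top" "0 < d"
  then obtain r where r: "r \<ge> 0" "F = ennreal r" using fin_ennreal by blast
  then have "F + ennreal d = ennreal (r + d)" using \<open>0 < d\<close> by (simp add: ennreal_plus)
  then show ?thesis using r \<open>0 < d\<close> by (simp add: ennreal_less_iff)
qed

lemma inf_comb:
  fixes f :: "'a \<Rightarrow> ennreal" and g :: "'b \<Rightarrow> ennreal"
  assumes a: "0 < a" and b: "0 < b"
    and h: "\<And>x y. x \<in> X \<Longrightarrow> y \<in> Y \<Longrightarrow> L \<le> ennreal a * f x + ennreal b * g y"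
  shows "L \<le> ennreal a * (INF x\<in>X. f x) + ennreal b * (INF y\<in>Y. g y)"
proof (rule ennreal_le_epsilon)
  fix e :: real
  assume fin: "ennreal a * (INF x\<in>X. f x) + ennreal b * (INF y\<in>Y. g y) < top" and e: "0 < e"
  define F where "F = (INF x\<in>X. f x)"
  define G where "G = (INF y\<in>Y. g y)"
  have "ennreal a * F < top" "ennreal b * G < top" using fin unfolding F_def G_def by simp_all
  then have Ft: "F < top" and Gt: "G < top" using a b by (auto simp: ennreal_mult_less_top)
  define d where "d = e / (a + b)"
  have d: "0 < d" unfolding d_def using a b e by simp
  have "F < F + ennreal d" by (rule lt_add_eps[OF Ft d])
  then obtain x where x: "x \<in> X" "f x < F + ennreal d" unfolding F_def by (auto simp: INF_less_iff)
  have "G < G + ennreal d" by (rule lt_add_eps[OF Gt d])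
  then obtain y where y: "y \<in> Y" "g y < G + ennreal d" unfolding G_def by (auto simp: INF_less_iff)
  have "L \<le> ennreal a * f x + ennreal b * g y" by (rule h[OF x(1) y(1)])
  also have "\<dots> \<le> ennreal a * (F + ennreal d) + ennreal b * (G + ennreal d)"
    using x(2) y(2) by (intro add_mono mult_left_mono) auto
  also have "\<dots> = ennreal a * F + ennreal b * G + ennreal (a * d + b * d)"
  proof -
    have e1: "ennreal a * ennreal d = ennreal (a * d)" by (rule ennreal_mult[symmetric]) (use a d in auto)
    have e2: "ennreal b * ennreal d = ennreal (b * d)" by (rule ennreal_mult[symmetric]) (use b d in auto)
    have e3: "ennreal (a * d) + ennreal (b * d) = ennreal (a * d + b * d)" by (rule ennreal_plus[symmetric]) (use a b d in auto)
    have "ennreal a * (F + ennreal d) + ennreal b * (G + ennreal d) =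
          ennreal a * F + ennreal b * G + (ennreal a * ennreal d + ennreal b * ennreal d)"
      by (simp add: distrib_left add_ac)
    then show ?thesis using e1 e2 e3 by simp
  qed
  also have "a * d + b * d = e"
  proof -
    have "a * d + b * d = (a + b) * d" by (simp add: distrib_right)
    also have "\<dots> = e" unfolding d_def using a b by simp
    finally show ?thesis .
  qed
  finally show "L \<le> ennreal a * (INF x\<in>X. f x) + ennreal b * (INF y\<in>Y. g y) + ennreal e"
    unfolding F_def G_def .
qed



definition mixm :: "real \<Rightarrow> 'a measure \<Rightarrow> 'a measure \<Rightarrow> 'a measure" where
  "mixm s M N = summ (scale_measure (ennreal s) M) (scale_measure (ennreal (1 - s)) N)"

lemma mix_sets: "sets (mixm s M N) = sets M"
  unfolding mixm_def by simp

lemma mix_int: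
  assumes s1: "sets \<gamma>1 = sets borel" and s2: "sets \<gamma>2 = sets borel"
    and f: "f \<in> borel_measurable borel"
  shows "nn_integral (mixm s \<gamma>1 \<gamma>2) f = ennreal s * nn_integral \<gamma>1 f + ennreal (1 - s) * nn_integral \<gamma>2 f"
proof -
  have ss: "sets (scale_measure (ennreal (1 - s)) \<gamma>2) = sets (scale_measure (ennreal s) \<gamma>1)"
    using s1 s2 by simp
  have fm: "f \<in> borel_measurable (scale_measure (ennreal s) \<gamma>1)" by (rule meas_tr[OF f]) (simp add: s1)
  have f1: "f \<in> borel_measurable \<gamma>1" by (rule meas_tr[OF f s1])
  have f2: "f \<in> borel_measurable \<gamma>2" by (rule meas_tr[OF f s2])
  show ?thesis unfolding mixm_def summ_nn_integral[OF ss fm]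
    by (simp add: nn_integral_scale_measure[OF f1] nn_integral_scale_measure[OF f2])
qed

lemma mix_plan:
  assumes g1: "\<gamma>1 \<in> plans P1 Q" and g2: "\<gamma>2 \<in> plans P2 Q" and s: "0 \<le> s" "s \<le> 1"
  shows "mixm s \<gamma>1 \<gamma>2 \<in> plans (\<lambda>A. s * P1 A + (1 - s) * P2 A) Q"
    and "transport_cost (mixm s \<gamma>1 \<gamma>2) = ennreal s * transport_cost \<gamma>1 + ennreal (1 - s) * transport_cost \<gamma>2"
proof -
  have s1: "sets \<gamma>1 = sets borel" and s2: "sets \<gamma>2 = sets borel" using g1 g2 by (auto simp: plans_def)
  note mi = mix_int[OF s1 s2, of _ s]
  show "transport_cost (mixm s \<gamma>1 \<gamma>2) = ennreal s * transport_cost \<gamma>1 + ennreal (1 - s) * transport_cost \<gamma>2"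
    unfolding transport_cost_def by (rule mi[OF cost_meas])
  have m1: "(\<integral>\<^sup>+ p. ennreal ((cmod (fst p))\<^sup>2 + (cmod (snd p))\<^sup>2) \<partial>\<gamma>1) < \<infinity>"
    and m2: "(\<integral>\<^sup>+ p. ennreal ((cmod (fst p))\<^sup>2 + (cmod (snd p))\<^sup>2) \<partial>\<gamma>2) < \<infinity>"
    using g1 g2 by (auto simp: plans_def)
  have mom: "(\<integral>\<^sup>+ p. ennreal ((cmod (fst p))\<^sup>2 + (cmod (snd p))\<^sup>2) \<partial>mixm s \<gamma>1 \<gamma>2) < \<infinity>"
    unfolding mi[OF mom_meas] using m1 m2 by (simp add: ennreal_mult_less_top)
  have marg: "0 \<le> s * P1 A + (1 - s) * P2 A \<and>
         (\<integral>\<^sup>+ p. ennreal ((cmod (fst p))\<^sup>2) * indicator A (theta (fst p)) \<partial>mixm s \<gamma>1 \<gamma>2) = ennreal (s * P1 A + (1 - s) * P2 A) \<and>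
         0 \<le> Q A \<and>
         (\<integral>\<^sup>+ p. ennreal ((cmod (snd p))\<^sup>2) * indicator A (theta (snd p)) \<partial>mixm s \<gamma>1 \<gamma>2) = ennreal (Q A)"
    if A: "A \<in> sets S1M" for A
  proof -
    have Ab: "A \<in> sets borel" by (rule S1M_borel[OF A])
    have p1: "0 \<le> P1 A" "(\<integral>\<^sup>+ p. ennreal ((cmod (fst p))\<^sup>2) * indicator A (theta (fst p)) \<partial>\<gamma>1) = ennreal (P1 A)"
      "0 \<le> Q A" "(\<integral>\<^sup>+ p. ennreal ((cmod (snd p))\<^sup>2) * indicator A (theta (snd p)) \<partial>\<gamma>1) = ennreal (Q A)"
      using g1 A unfolding plans_def by auto
    have p2: "0 \<le> P2 A" "(\<integral>\<^sup>+ p. ennreal ((cmod (fst p))\<^sup>2) * indicator A (theta (fst p)) \<partial>\<gamma>2) = ennreal (P2 A)"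
      "(\<integral>\<^sup>+ p. ennreal ((cmod (snd p))\<^sup>2) * indicator A (theta (snd p)) \<partial>\<gamma>2) = ennreal (Q A)"
      using g2 A unfolding plans_def by auto
    have nn: "0 \<le> s * P1 A + (1 - s) * P2 A" using p1 p2 s by simp
    have i1: "(\<integral>\<^sup>+ p. ennreal ((cmod (fst p))\<^sup>2) * indicator A (theta (fst p)) \<partial>mixm s \<gamma>1 \<gamma>2)
        = ennreal s * ennreal (P1 A) + ennreal (1 - s) * ennreal (P2 A)"
      unfolding mi[OF marg1_meas[OF Ab]] p1(2) p2(2) ..
    also have "\<dots> = ennreal (s * P1 A + (1 - s) * P2 A)"
      using p1 p2 s by (simp add: ennreal_mult ennreal_plus)
    finally have i1': "(\<integral>\<^sup>+ p. ennreal ((cmod (fst p))\<^sup>2) * indicator A (theta (fst p)) \<partial>mixm s \<gamma>1 \<gamma>2)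
        = ennreal (s * P1 A + (1 - s) * P2 A)" .
    have "(\<integral>\<^sup>+ p. ennreal ((cmod (snd p))\<^sup>2) * indicator A (theta (snd p)) \<partial>mixm s \<gamma>1 \<gamma>2)
        = ennreal s * ennreal (Q A) + ennreal (1 - s) * ennreal (Q A)"
      unfolding mi[OF marg2_meas[OF Ab]] p1(4) p2(3) ..
    also have "\<dots> = (ennreal s + ennreal (1 - s)) * ennreal (Q A)" by (simp add: distrib_right)
    also have "ennreal s + ennreal (1 - s) = 1" using s by (simp add: ennreal_plus[symmetric])
    finally have i2: "(\<integral>\<^sup>+ p. ennreal ((cmod (snd p))\<^sup>2) * indicator A (theta (snd p)) \<partial>mixm s \<gamma>1 \<gamma>2)
        = ennreal (Q A)" by simp
    show ?thesis using nn i1' p1(3) i2 by simp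
  qed
  show "mixm s \<gamma>1 \<gamma>2 \<in> plans (\<lambda>A. s * P1 A + (1 - s) * P2 A) Q"
    unfolding plans_def using mom marg mix_sets[of s \<gamma>1 \<gamma>2] s1 by auto
qed



lemma conv_main:
  assumes nnm: "nonneg_measure_S1 \<mu>" and nzm: "\<mu> \<noteq> zero_sm"
    and nnn: "nonneg_measure_S1 \<nu>" and nzn: "\<nu> \<noteq> zero_sm"
    and t0: "0 < t" and t1: "t < 1"
  shows "S_fun \<mu>1 (add_sm (scale_sm t \<mu>) (scale_sm (1 - t) \<nu>))
           \<le> ennreal t * S_fun \<mu>1 \<mu> + ennreal (1 - t) * S_fun \<mu>1 \<nu>"
proof -
  define X where "X = scale_sm (1 / total_variation \<mu>1) \<mu>1"
  define \<rho> where "\<rho> = add_sm (scale_sm t \<mu>) (scale_sm (1 - t) \<nu>)"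
  define mm where "mm = \<mu> S1"
  define mn where "mn = \<nu> S1"
  have mm: "0 < mm" unfolding mm_def by (rule nonneg_pos_mass[OF nnm nzm])
  have mn: "0 < mn" unfolding mn_def by (rule nonneg_pos_mass[OF nnn nzn])
  define mr where "mr = t * mm + (1 - t) * mn"
  have mr: "0 < mr" unfolding mr_def using mm mn t0 t1 by (simp add: add_pos_pos)
  have smu: "signed_measure_S1 \<mu>" and pmu: "\<And>A. 0 \<le> \<mu> A" using nnm by (auto simp: nonneg_measure_S1_def)
  have snu: "signed_measure_S1 \<nu>" and pnu: "\<And>A. 0 \<le> \<nu> A" using nnn by (auto simp: nonneg_measure_S1_def)
  have nnr: "nonneg_measure_S1 \<rho>"
    unfolding nonneg_measure_S1_def \<rho>_def
    using add_signed[OF scale_signed[OF smu] scale_signed[OF snu]] pmu pnu t0 t1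
    by (auto simp: add_sm_def scale_sm_def)
  have rS1: "\<rho> S1 = mr" unfolding \<rho>_def mr_def mm_def mn_def by (simp add: add_sm_def scale_sm_def)
  have nzr: "\<rho> \<noteq> zero_sm" using rS1 mr by (auto simp: zero_sm_def)
  define s where "s = t * mm / mr"
  have s0: "0 \<le> s" and s1: "s \<le> 1" unfolding s_def using mm mn mr t0 t1
    by (simp_all add: mr_def divide_le_eq_1)
  have oms: "1 - s = (1 - t) * mn / mr" unfolding s_def using mr by (simp add: mr_def field_simps)
  define Nm where "Nm = scale_sm (1 / mm) \<mu>"
  define Nn where "Nn = scale_sm (1 / mn) \<nu>"
  have Nr: "scale_sm (1 / mr) \<rho> = (\<lambda>A. s * Nm A + (1 - s) * Nn A)"
    unfolding oms unfolding s_def Nm_def Nn_def \<rho>_def using mm mn mr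
    by (auto simp: fun_eq_iff scale_sm_def add_sm_def field_simps)
  have Sr: "S_fun \<mu>1 \<rho> = ennreal (mr / 2) * (INF \<gamma>\<in>plans (\<lambda>A. s * Nm A + (1 - s) * Nn A) X. transport_cost \<gamma>)"
    using S_nonneg[OF nnr nzr, of \<mu>1] unfolding rS1 Nr X_def WFR_sq .
  have Sm: "S_fun \<mu>1 \<mu> = ennreal (mm / 2) * (INF \<gamma>\<in>plans Nm X. transport_cost \<gamma>)"
    using S_nonneg[OF nnm nzm, of \<mu>1] unfolding mm_def[symmetric] Nm_def X_def WFR_sq .
  have Sn: "S_fun \<mu>1 \<nu> = ennreal (mn / 2) * (INF \<gamma>\<in>plans Nn X. transport_cost \<gamma>)"
    using S_nonneg[OF nnn nzn, of \<mu>1] unfolding mn_def[symmetric] Nn_def X_def WFR_sq .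
  have key: "S_fun \<mu>1 \<rho> \<le> ennreal (t * mm / 2) * transport_cost \<gamma>1 + ennreal ((1 - t) * mn / 2) * transport_cost \<gamma>2"
    if g1: "\<gamma>1 \<in> plans Nm X" and g2: "\<gamma>2 \<in> plans Nn X" for \<gamma>1 \<gamma>2
  proof -
    have mp: "mixm s \<gamma>1 \<gamma>2 \<in> plans (\<lambda>A. s * Nm A + (1 - s) * Nn A) X"
      by (rule mix_plan(1)[OF g1 g2 s0 s1])
    have "S_fun \<mu>1 \<rho> \<le> ennreal (mr / 2) * transport_cost (mixm s \<gamma>1 \<gamma>2)"
      unfolding Sr by (intro mult_left_mono INF_lower mp) simp
    also have "\<dots> = ennreal (mr / 2) * (ennreal s * transport_cost \<gamma>1 + ennreal (1 - s) * transport_cost \<gamma>2)"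
      by (simp only: mix_plan(2)[OF g1 g2 s0 s1])
    also have "\<dots> = (ennreal (mr / 2) * ennreal s) * transport_cost \<gamma>1 + (ennreal (mr / 2) * ennreal (1 - s)) * transport_cost \<gamma>2"
      by (simp add: distrib_left mult.assoc)
    also have "ennreal (mr / 2) * ennreal s = ennreal (t * mm / 2)"
    proof -
      have "ennreal (mr / 2) * ennreal s = ennreal (mr / 2 * s)" by (rule ennreal_mult[symmetric]) (use mr s0 in auto)
      also have "mr / 2 * s = t * mm / 2" unfolding s_def using mr by simp
      finally show ?thesis .
    qed
    also have "ennreal (mr / 2) * ennreal (1 - s) = ennreal ((1 - t) * mn / 2)"
    proof -
      have "ennreal (mr / 2) * ennreal (1 - s) = ennreal (mr / 2 * (1 - s))" by (rule ennreal_mult[symmetric]) (use mr s1 in auto)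
      also have "mr / 2 * (1 - s) = (1 - t) * mn / 2" unfolding oms using mr by simp
      finally show ?thesis .
    qed
    finally show ?thesis unfolding \<rho>_def .
  qed
  have a: "0 < t * mm / 2" using t0 mm by simp
  have b: "0 < (1 - t) * mn / 2" using t1 mn by simp
  have "S_fun \<mu>1 \<rho> \<le> ennreal (t * mm / 2) * (INF \<gamma>\<in>plans Nm X. transport_cost \<gamma>)
       + ennreal ((1 - t) * mn / 2) * (INF \<gamma>\<in>plans Nn X. transport_cost \<gamma>)"
    by (rule inf_comb[OF a b key])
  also have "ennreal (t * mm / 2) = ennreal t * ennreal (mm / 2)"
    by (subst ennreal_mult[symmetric]) (use t0 mm in auto)
  also have "ennreal ((1 - t) * mn / 2) = ennreal (1 - t) * ennreal (mn / 2)"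
    by (subst ennreal_mult[symmetric]) (use t1 mn in auto)
  finally show ?thesis unfolding \<rho>_def Sm Sn by (simp add: mult.assoc)
qed



theorem proposition4p6:
  fixes \<mu>1 :: "complex set \<Rightarrow> real"
  assumes "nonneg_measure_S1 \<mu>1" and "\<mu>1 \<noteq> zero_sm"
  shows "(\<forall>\<mu> \<nu> t. signed_measure_S1 \<mu> \<longrightarrow> signed_measure_S1 \<nu> \<longrightarrow> 0 \<le> t \<longrightarrow> t \<le> 1 \<longrightarrow>
            S_fun \<mu>1 (add_sm (scale_sm t \<mu>) (scale_sm (1 - t) \<nu>))
              \<le> ennreal t * S_fun \<mu>1 \<mu> + ennreal (1 - t) * S_fun \<mu>1 \<nu>)
       \<and> (\<forall>\<mu> c. signed_measure_S1 \<mu> \<longrightarrow> 0 < c \<longrightarrow>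
            S_fun \<mu>1 (scale_sm c \<mu>) = ennreal c * S_fun \<mu>1 \<mu>)"
proof (intro conjI allI impI)
  fix \<mu> c assume sm: "signed_measure_S1 \<mu>" and c: "0 < (c::real)"
  show "S_fun \<mu>1 (scale_sm c \<mu>) = ennreal c * S_fun \<mu>1 \<mu>" by (rule S_homog[OF sm c])
next
  fix \<mu> \<nu> and t :: real
  assume smu: "signed_measure_S1 \<mu>" and snu: "signed_measure_S1 \<nu>" and t0: "0 \<le> t" and t1: "t \<le> 1"
  show "S_fun \<mu>1 (add_sm (scale_sm t \<mu>) (scale_sm (1 - t) \<nu>))
              \<le> ennreal t * S_fun \<mu>1 \<mu> + ennreal (1 - t) * S_fun \<mu>1 \<nu>"
  proof (cases "t = 0")
    case True
    have "add_sm (scale_sm t \<mu>) (scale_sm (1 - t) \<nu>) = \<nu>"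
      using True by (simp add: fun_eq_iff add_sm_def scale_sm_def)
    then show ?thesis using True by simp
  next
    case tn0: False
    show ?thesis
    proof (cases "t = 1")
      case True
      have "add_sm (scale_sm t \<mu>) (scale_sm (1 - t) \<nu>) = \<mu>"
        using True by (simp add: fun_eq_iff add_sm_def scale_sm_def)
      then show ?thesis using True by simp
    next
      case tn1: False
      have tp: "0 < t" and tl: "t < 1" using t0 t1 tn0 tn1 by auto
      show ?thesis
      proof (cases "\<exists>A. \<mu> A < 0")
        case True
        then obtain A where "\<mu> A < 0" by blast
        then have "S_fun \<mu>1 \<mu> = top" by (rule S_top[OF smu])
        then have "ennreal t * S_fun \<mu>1 \<mu> = top" using tp by (simp add: ennreal_mult_top)
        then show ?thesis by simp
      next
        case nm: False
        show ?thesis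
        proof (cases "\<exists>A. \<nu> A < 0")
          case True
          then obtain A where "\<nu> A < 0" by blast
          then have "S_fun \<mu>1 \<nu> = top" by (rule S_top[OF snu])
          then have "ennreal (1 - t) * S_fun \<mu>1 \<nu> = top" using tl by (simp add: ennreal_mult_top)
          then show ?thesis by simp
        next
          case nn: False
          have nnm: "nonneg_measure_S1 \<mu>" using smu nm by (auto simp: nonneg_measure_S1_def not_less)
          have nnn: "nonneg_measure_S1 \<nu>" using snu nn by (auto simp: nonneg_measure_S1_def not_less)
          show ?thesis
          proof (cases "\<mu> = zero_sm")
            case True
            have "add_sm (scale_sm t \<mu>) (scale_sm (1 - t) \<nu>) = scale_sm (1 - t) \<nu>"
              using True by (simp add: fun_eq_iff add_sm_def scale_sm_def zero_sm_def)
            then show ?thesis using True S_homog[OF snu, of "1 - t" \<mu>1] tl by simp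
          next
            case nzm: False
            show ?thesis
            proof (cases "\<nu> = zero_sm")
              case True
              have "add_sm (scale_sm t \<mu>) (scale_sm (1 - t) \<nu>) = scale_sm t \<mu>"
                using True by (simp add: fun_eq_iff add_sm_def scale_sm_def zero_sm_def)
              then show ?thesis using True S_homog[OF smu tp, of \<mu>1] by simp
            next
              case nzn: False
              show ?thesis by (rule conv_main[OF nnm nzm nnn nzn tp tl])
            qed
          qed
        qed
      qed
    qed
  qed
qed

end
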